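(* Let $\theta\in(0,\pi)$ and $u\in\mathscr{C}^\infty_0(\mathbb{R}_+)$, and define $$\mathscr{K}_\theta(u)(t):=\int_0^\infty(st)^{-1/4}\mathfrak{K}_\theta(t/s)u(s)\,ds,\qquad t>0,$$ where $\mathfrak{K}_\theta(\tau):=\big(4\sin^2(\theta)+(\sqrt\tau-1/\sqrt\tau)^2\big)^{-1/4}$. Then for every $\beta\in(0,1/2)$, $$\int_0^\infty|\mathscr{K}_\theta(u)(t)|^2\,t^{2\beta}\,\frac{dt}{t}<+\infty,$$ i.e. $\mathscr{K}_\theta(u)\in\mathcal{L}^2_{-\beta}(\mathbb{R}_+)$.
   Context: $\mathscr{C}^\infty_0(\mathbb{R}_+)$: smooth functions on $[0,\infty)$ with bounded support contained in $(0,\infty)$. For $\gamma\in\mathbb{R}$, $\mathcal{L}^2_\gamma(\mathbb{R}_+)$ is the completion of $\mathscr{C}^\infty_0(\mathbb{R}_+)$ for the norm $\|u\|^2_{\mathcal{L}^2_\gamma(\mathbb{R}_+)}:=\int_0^\infty|u(r)|^2r^{-2\gamma}\,dr/r$. *)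

theory Defs
  imports "HOL-Analysis.Analysis"
begin

text \<open>Smooth functions on [0,inf) with bounded support contained in (0,inf):
  infinitely differentiable everywhere on the real line (they vanish near 0) and
  vanishing outside some compact interval [a,b] with 0 < a.\<close>
definition C0inf_Rplus :: "(real \<Rightarrow> complex) \<Rightarrow> bool" where
  "C0inf_Rplus u \<longleftrightarrow>
     (\<forall>k. \<forall>x. ((deriv ^^ k) (\<lambda>y. Re (u y))) differentiable (at x)) \<and>
     (\<forall>k. \<forall>x. ((deriv ^^ k) (\<lambda>y. Im (u y))) differentiable (at x)) \<and>
     (\<exists>a b. 0 < a \<and> a \<le> b \<and> (\<forall>x. x \<notin> {a..b} \<longrightarrow> u x = 0))"

definition frakK :: "real \<Rightarrow> real \<Rightarrow> real" where
  "frakK \<theta> \<tau> = (4 * (sin \<theta>)\<^sup>2 + (sqrt \<tau> - 1 / sqrt \<tau>)\<^sup>2) powr (-1/4)"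

definition scrK :: "real \<Rightarrow> (real \<Rightarrow> complex) \<Rightarrow> real \<Rightarrow> complex" where
  "scrK \<theta> u t = (LINT s:{0<..}|lborel. of_real ((s * t) powr (-1/4) * frakK \<theta> (t / s)) * u s)"

end

theory Submission
  imports Defs
begin

lemma frakK_bound:
  fixes \<theta> \<tau> :: real
  assumes "sin \<theta> \<noteq> 0" "\<tau> > 0"
  shows "frakK \<theta> \<tau> \<le> ((sin \<theta>)\<^sup>2) powr (-1/4) * \<tau> powr (-1/4)"
    and "frakK \<theta> \<tau> \<le> ((sin \<theta>)\<^sup>2) powr (-1/4) * \<tau> powr (1/4)"
proof -
  define c where "c = (sin \<theta>)\<^sup>2"
  have c0: "c > 0" using assms unfolding c_def by simp
  have c1: "c \<le> 1" unfolding c_def by (simp add: abs_sin_le_one power_le_one_iff abs_square_le_1)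
  have sq: "(sqrt \<tau> - 1 / sqrt \<tau>)\<^sup>2 = \<tau> + 1/\<tau> - 2"
  proof -
    have x0: "sqrt \<tau> > 0" using assms(2) by simp
    have "(sqrt \<tau> - 1 / sqrt \<tau>)\<^sup>2 = (sqrt \<tau>)\<^sup>2 + (1 / sqrt \<tau>)\<^sup>2 - 2 * sqrt \<tau> * (1 / sqrt \<tau>)"
      by (rule power2_diff)
    also have "\<dots> = \<tau> + 1/\<tau> - 2"
      using x0 assms(2) by (simp add: power_one_over)
    finally show ?thesis .
  qed
  have tt: "\<tau> + 1/\<tau> \<ge> 2"
  proof -
    have "(\<tau> - 1)\<^sup>2 \<ge> 0" by simp
    hence "\<tau>*\<tau> + 1 \<ge> 2 * \<tau>" by (simp add: power2_eq_square algebra_simps)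
    thus ?thesis using assms(2) by (simp add: field_simps)
  qed
  have base: "4 * (sin \<theta>)\<^sup>2 + (sqrt \<tau> - 1 / sqrt \<tau>)\<^sup>2 \<ge> c * (\<tau> + 1/\<tau>)"
  proof -
    have "c * (\<tau> + 1/\<tau> - 2) \<le> 1 * (\<tau> + 1/\<tau> - 2)"
      using c1 tt by (intro mult_right_mono) auto
    thus ?thesis unfolding sq c_def[symmetric] using c0 by (simp add: algebra_simps)
  qed
  have p1: "c * \<tau> > 0" using c0 assms by simp
  have p2: "c / \<tau> > 0" using c0 assms by simp
  have e1: "c * (\<tau> + 1/\<tau>) = c * \<tau> + c / \<tau>" by (simp add: algebra_simps)
  have b1: "c * \<tau> \<le> 4 * (sin \<theta>)\<^sup>2 + (sqrt \<tau> - 1 / sqrt \<tau>)\<^sup>2"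
    using base p2 unfolding e1 by linarith
  have b2: "c / \<tau> \<le> 4 * (sin \<theta>)\<^sup>2 + (sqrt \<tau> - 1 / sqrt \<tau>)\<^sup>2"
    using base p1 unfolding e1 by linarith
  have "frakK \<theta> \<tau> \<le> (c * \<tau>) powr (-1/4)"
    unfolding frakK_def
    by (rule powr_mono2') (use b1 p1 in auto)
  also have "\<dots> = c powr (-1/4) * \<tau> powr (-1/4)"
    using c0 assms by (simp add: powr_mult)
  finally show "frakK \<theta> \<tau> \<le> ((sin \<theta>)\<^sup>2) powr (-1/4) * \<tau> powr (-1/4)" unfolding c_def .
  have "frakK \<theta> \<tau> \<le> (c / \<tau>) powr (-1/4)"
    unfolding frakK_def
    by (rule powr_mono2') (use b2 p2 in auto)
  also have "\<dots> = c powr (-1/4) / \<tau> powr (-1/4)"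
    by (rule powr_divide)
  also have "\<dots> = c powr (-1/4) * \<tau> powr (1/4)"
  proof -
    have m: "\<tau> powr (-1/4) = inverse (\<tau> powr (1/4))"
      using powr_minus[of \<tau> "1/4"] by simp
    show ?thesis unfolding m by (simp only: divide_inverse inverse_inverse_eq)
  qed
  finally show "frakK \<theta> \<tau> \<le> ((sin \<theta>)\<^sup>2) powr (-1/4) * \<tau> powr (1/4)" unfolding c_def .
qed

lemma kernel_bound:
  fixes \<theta> s t a :: real
  assumes "sin \<theta> \<noteq> 0" "t > 0" "s \<ge> a" "a > 0"
  shows "(s * t) powr (-1/4) * frakK \<theta> (t / s) \<le> ((sin \<theta>)\<^sup>2) powr (-1/4) * t powr (-1/2)"
    and "(s * t) powr (-1/4) * frakK \<theta> (t / s) \<le> ((sin \<theta>)\<^sup>2) powr (-1/4) * a powr (-1/2)"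
proof -
  define c' where "c' = ((sin \<theta>)\<^sup>2) powr (-1/4)"
  have s0: "s > 0" using assms by simp
  have ts: "t / s > 0" using assms s0 by simp
  have st: "(s * t) powr (-1/4) \<ge> 0" by simp
  have "(s * t) powr (-1/4) * frakK \<theta> (t / s) \<le> (s * t) powr (-1/4) * (c' * (t/s) powr (-1/4))"
    using frakK_bound(1)[OF assms(1) ts] st unfolding c'_def by (intro mult_left_mono) auto
  also have "\<dots> = c' * (s powr (-1/4) / s powr (-1/4)) * (t powr (-1/4) * t powr (-1/4))"
    using s0 assms(2) by (simp add: powr_mult powr_divide)
  also have "\<dots> = c' * t powr (-1/2)"
    using s0 assms(2) by (simp add: powr_add[symmetric])
  finally show "(s * t) powr (-1/4) * frakK \<theta> (t / s) \<le> ((sin \<theta>)\<^sup>2) powr (-1/4) * t powr (-1/2)"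
    unfolding c'_def .
  have "(s * t) powr (-1/4) * frakK \<theta> (t / s) \<le> (s * t) powr (-1/4) * (c' * (t/s) powr (1/4))"
    using frakK_bound(2)[OF assms(1) ts] st unfolding c'_def by (intro mult_left_mono) auto
  also have "\<dots> = c' * (s powr (-1/4) / s powr (1/4)) * (t powr (-1/4) * t powr (1/4))"
    using s0 assms(2) by (simp add: powr_mult powr_divide)
  also have "\<dots> = c' * s powr (-1/2)"
    using s0 assms(2) by (simp add: powr_add[symmetric] powr_diff[symmetric])
  also have "\<dots> \<le> c' * a powr (-1/2)"
    unfolding c'_def using assms by (intro mult_left_mono powr_mono2') auto
  finally show "(s * t) powr (-1/4) * frakK \<theta> (t / s) \<le> ((sin \<theta>)\<^sup>2) powr (-1/4) * a powr (-1/2)"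
    unfolding c'_def .
qed

lemma norm_scrK_bound:
  fixes \<theta> t a b M :: real and u :: "real \<Rightarrow> complex"
  assumes sn: "sin \<theta> \<noteq> 0" and t0: "t > 0" and a0: "0 < a" and ab: "a \<le> b"
    and uz: "\<And>x. x \<notin> {a..b} \<Longrightarrow> u x = 0"
    and uM: "\<And>x. x \<in> {a..b} \<Longrightarrow> cmod (u x) \<le> M"
    and Eb: "\<And>s. s \<ge> a \<Longrightarrow> (s * t) powr (-1/4) * frakK \<theta> (t / s) \<le> E"
  shows "cmod (scrK \<theta> u t) \<le> M * E * (b - a)"
proof -
  define k where "k s = (s * t) powr (-1/4) * frakK \<theta> (t / s)" for s
  define f where "f s = indicator {0<..} s *\<^sub>R (of_real (k s) * u s)" for s
  have k0: "k s \<ge> 0" for s unfolding k_def frakK_def by simp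
  have M0: "M \<ge> 0" using uM[of a] ab by (meson atLeastAtMost_iff norm_ge_zero order.refl order_trans)
  have E0: "E \<ge> 0" using Eb[of a] k0[of a] unfolding k_def by simp
  have eq: "scrK \<theta> u t = integral\<^sup>L lborel f"
    unfolding scrK_def set_lebesgue_integral_def f_def k_def by simp
  have pw: "ennreal (norm (f s)) \<le> ennreal (indicator {a..b} s * (M * E))" for s
  proof (cases "s \<in> {a..b}")
    case True
    then have "s > 0" "s \<ge> a" using a0 by auto
    then have "norm (f s) = k s * cmod (u s)" unfolding f_def using k0[of s] by (simp add: norm_mult)
    also have "\<dots> \<le> E * M"
      using Eb[OF \<open>s \<ge> a\<close>] uM[OF True] k0[of s] E0 unfolding k_def by (intro mult_mono) auto
    finally show ?thesis using True by (simp add: mult.commute ennreal_leI)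
  next
    case False
    then show ?thesis using uz[OF False] unfolding f_def by simp
  qed
  have "ennreal (norm (integral\<^sup>L lborel f)) \<le> (\<integral>\<^sup>+ s. ennreal (norm (f s)) \<partial>lborel)"
  proof (cases "integrable lborel f")
    case True
    then show ?thesis by (rule integral_norm_bound_ennreal)
  next
    case False
    then show ?thesis by (simp add: not_integrable_integral_eq)
  qed
  also have "\<dots> \<le> (\<integral>\<^sup>+ s. ennreal (indicator {a..b} s * (M * E)) \<partial>lborel)"
    by (rule nn_integral_mono) (rule pw)
  also have "\<dots> = ennreal (M * E * (b - a))"
  proof (rule nn_integral_has_integral_lebesgue)
    show "((\<lambda>_. M * E) has_integral (M * E * (b - a))) {a..b}"
      using has_integral_const_real[of "M * E" a b] ab by (simp add: mult.commute)
  qed (use M0 E0 in auto)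
  finally show ?thesis unfolding eq using M0 E0 ab by (simp add: ennreal_le_iff)
qed

theorem lemma7:
  fixes \<theta> \<beta> :: real and u :: "real \<Rightarrow> complex"
  assumes "0 < \<theta>" "\<theta> < pi"
    and "C0inf_Rplus u"
    and "0 < \<beta>" "\<beta> < 1/2"
  shows "(\<integral>\<^sup>+ t\<in>{0<..}. ennreal ((cmod (scrK \<theta> u t))\<^sup>2 * t powr (2 * \<beta>) / t) \<partial>lborel) < \<infinity>"
proof -
  have sn: "sin \<theta> \<noteq> 0" using sin_gt_zero[OF assms(1,2)] by simp
  obtain a b where a0: "0 < a" and ab: "a \<le> b" and uz: "\<And>x. x \<notin> {a..b} \<Longrightarrow> u x = 0"
    using assms(3) unfolding C0inf_Rplus_def by blast
  have dR: "\<And>x. (\<lambda>y. Re (u y)) differentiable (at x)"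
    using assms(3) unfolding C0inf_Rplus_def by (metis funpow_0)
  have dI: "\<And>x. (\<lambda>y. Im (u y)) differentiable (at x)"
    using assms(3) unfolding C0inf_Rplus_def by (metis funpow_0)
  have cR: "continuous_on {a..b} (\<lambda>y. Re (u y))"
    by (intro continuous_at_imp_continuous_on ballI differentiable_imp_continuous_within dR)
  have cI: "continuous_on {a..b} (\<lambda>y. Im (u y))"
    by (intro continuous_at_imp_continuous_on ballI differentiable_imp_continuous_within dI)
  obtain MR where MR: "\<And>x. x \<in> {a..b} \<Longrightarrow> \<bar>Re (u x)\<bar> \<le> MR"
    using compact_imp_bounded[OF compact_continuous_image[OF cR compact_Icc]]
    unfolding bounded_iff by (metis image_eqI real_norm_def)
  obtain MI where MI: "\<And>x. x \<in> {a..b} \<Longrightarrow> \<bar>Im (u x)\<bar> \<le> MI"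
    using compact_imp_bounded[OF compact_continuous_image[OF cI compact_Icc]]
    unfolding bounded_iff by (metis image_eqI real_norm_def)
  define M where "M = MR + MI"
  have uM: "cmod (u x) \<le> M" if "x \<in> {a..b}" for x
    using cmod_le[of "u x"] MR[OF that] MI[OF that] unfolding M_def by linarith
  have M0: "M \<ge> 0" using uM[of a] ab by (meson atLeastAtMost_iff norm_ge_zero order.refl order_trans)
  define c' where "c' = ((sin \<theta>)\<^sup>2) powr (-1/4)"
  have c'0: "c' \<ge> 0" unfolding c'_def by simp
  define L where "L = M * c' * (b - a)"
  have L0: "L \<ge> 0" unfolding L_def using M0 c'0 ab by simp
  have K1: "cmod (scrK \<theta> u t) \<le> L * a powr (-1/2)" if "t > 0" for t
    using norm_scrK_bound[OF sn that a0 ab uz uM, where E="c' * a powr (-1/2)"]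
      kernel_bound(2)[OF sn that _ a0] unfolding L_def c'_def by (simp add: mult_ac)
  have K2: "cmod (scrK \<theta> u t) \<le> L * t powr (-1/2)" if "t > 0" for t
    using norm_scrK_bound[OF sn that a0 ab uz uM, where E="c' * t powr (-1/2)"]
      kernel_bound(1)[OF sn that _ a0] unfolding L_def c'_def by (simp add: mult_ac)
  define p where "p = 2 * \<beta> - 1"
  define q where "q = 2 * \<beta> - 2"
  define D1 where "D1 = (L * a powr (-1/2))\<^sup>2"
  define D2 where "D2 = L\<^sup>2"
  define F where "F t = (cmod (scrK \<theta> u t))\<^sup>2 * t powr (2 * \<beta>) / t" for t
  define G1 where "G1 x = ennreal (indicator {0..1} x * (D1 * x powr p))" for x :: real
  define G2 where "G2 x = ennreal (indicator {1..} x * (D2 * x powr q))" for x :: real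
  have pw: "ennreal (F t) * indicator {0<..} t \<le> G1 t + G2 t" for t
  proof (cases "t > 0")
    case False then show ?thesis by simp
  next
    case True
    have tp: "t powr (2 * \<beta>) / t = t powr p"
      unfolding p_def using True by (simp add: powr_diff)
    have Fe: "F t = (cmod (scrK \<theta> u t))\<^sup>2 * t powr p"
      unfolding F_def using tp by (simp add: times_divide_eq_right[symmetric] del: times_divide_eq_right)
    show ?thesis
    proof (cases "t \<le> 1")
      case True2: True
      have "(cmod (scrK \<theta> u t))\<^sup>2 \<le> D1"
        unfolding D1_def by (rule power_mono[OF K1[OF True]]) simp
      then have "F t \<le> D1 * t powr p" unfolding Fe by (intro mult_right_mono) auto
      then have "ennreal (F t) \<le> G1 t" unfolding G1_def using True True2
        by (simp add: ennreal_leI)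
      then show ?thesis using True by (simp add: add_increasing2)
    next
      case False
      have "(cmod (scrK \<theta> u t))\<^sup>2 \<le> (L * t powr (-1/2))\<^sup>2"
        by (rule power_mono[OF K2[OF True]]) simp
      also have "\<dots> = D2 * t powr (-1)"
      proof -
        have h: "t powr (-1/2) * t powr (-1/2) = t powr (-1)"
          unfolding powr_add[symmetric] by simp
        have "(L * t powr (-1/2))\<^sup>2 = L\<^sup>2 * (t powr (-1/2) * t powr (-1/2))"
          by (simp add: power2_eq_square mult_ac)
        then show ?thesis unfolding h D2_def .
      qed
      finally have "F t \<le> D2 * t powr (-1) * t powr p" unfolding Fe by (intro mult_right_mono) auto
      also have "\<dots> = D2 * t powr q"
      proof -
        have "t powr (-1) * t powr p = t powr q"
          unfolding powr_add[symmetric] p_def q_def by simp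
        then show ?thesis by (simp only: mult.assoc)
      qed
      finally have "ennreal (F t) \<le> G2 t" unfolding G2_def using True False
        by (simp add: ennreal_leI)
      then show ?thesis using True by (simp add: add_increasing)
    qed
  qed
  have I1: "(\<integral>\<^sup>+ x. G1 x \<partial>lborel) = ennreal (D1 *\<^sub>R (1 powr (p + 1) / (p + 1)))"
    unfolding G1_def
  proof (rule nn_integral_has_integral_lebesgue)
    have h1: "((\<lambda>x. x powr p) has_integral (1 powr (p+1)/(p+1))) {0..1}"
      by (rule has_integral_powr_from_0) (use assms(4) in \<open>auto simp: p_def\<close>)
    show "((\<lambda>x. D1 * x powr p) has_integral (D1 *\<^sub>R (1 powr (p + 1) / (p + 1)))) {0..1}"
      using has_integral_cmul[OF h1, of D1] by simp
  qed (auto simp: D1_def)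
  have I2: "(\<integral>\<^sup>+ x. G2 x \<partial>lborel) = ennreal (D2 *\<^sub>R (-(1 powr (q+1)) / (q+1)))"
    unfolding G2_def
  proof (rule nn_integral_has_integral_lebesgue)
    have h1: "((\<lambda>x. x powr q) has_integral (-(1 powr (q+1)) / (q+1))) {1..}"
      by (rule has_integral_powr_to_inf) (use assms(5) in \<open>auto simp: q_def\<close>)
    show "((\<lambda>x. D2 * x powr q) has_integral (D2 *\<^sub>R (-(1 powr (q+1)) / (q+1)))) {1..}"
      using has_integral_cmul[OF h1, of D2] by simp
  qed (auto simp: D2_def)
  have "(\<integral>\<^sup>+ t\<in>{0<..}. ennreal (F t) \<partial>lborel) \<le> (\<integral>\<^sup>+ t. G1 t + G2 t \<partial>lborel)"
    by (rule nn_integral_mono) (rule pw)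
  also have "\<dots> = (\<integral>\<^sup>+ t. G1 t \<partial>lborel) + (\<integral>\<^sup>+ t. G2 t \<partial>lborel)"
    by (rule nn_integral_add) (auto simp: G1_def G2_def)
  also have "\<dots> < \<infinity>" unfolding I1 I2 by simp
  finally show ?thesis unfolding F_def .
qed

end
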